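(* (a) Two elements $[\gamma,x,y],[\gamma',x',y']\in X_{\mathrm{rss}}$ are equivalent if and only if $[\bar\gamma\gamma,x,y]$ and $[\bar\gamma'\gamma',x',y']$ lie in the same $\mathrm{GL}_n(E)$-orbit of $M_n(E)$. (b) Two elements $[\zeta,z],[\zeta',z']\in Y^\beta_{\mathrm{rss}}$ are equivalent if and only if $[\beta^{-1}\zeta^*\beta\zeta,z,\beta^{-1}z^*]$ and $[\beta^{-1}\zeta'^*\beta\zeta',z',\beta^{-1}z'^*]$ lie in the same $\mathrm{GL}_n(E)$-orbit of $M_n(E)$.
   Context: $E/F$ is a quadratic extension of fields of characteristic $0$ (number fields or local fields), $x\mapsto\bar x$ its Galois involution, $g^*={}^t\bar g$, $F^-=\{x\in E:\bar x=-x\}$; $F_n,E_n$ are row vectors and $F^{-,n},E^n$ column vectors. $M_n(E)=\mathrm{Mat}_n(E)\times E_n\times E^n$ with right $\mathrm{GL}_n(E)$-action $[\xi,x,y].h=[h^{-1}\xi h,xh,h^{-1}y]$; $[\xi,x,y]$ is regular semisimple if $\xi$ is regular semisimple, $x,x\xi,\dots,x\xi^{n-1}$ span $E_n$, and $y,\xi y,\dots,\xi^{n-1}y$ span $E^n$. $\gamma$ is normal if $\bar\gamma\gamma\in\mathrm{GL}_n(F)$; $\sigma$-conjugation is $\gamma\mapsto g^{-1}\gamma\bar g$. $S$ is a set of normal representatives of the $\sigma$-conjugacy classes of $\gamma$ with $\bar\gamma\gamma$ regular semisimple, $T_\gamma=\{g:g^{-1}\gamma\bar g=\gamma\}$, $X=S\times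 F_n\times F^{-,n}$, $X_{\mathrm{rss}}=\{[\gamma,x,y]:[\bar\gamma\gamma,x,y]\in M_n(E)\text{ regular semisimple}\}$, and $[\gamma,x,y]\sim[\gamma',x',y']$ if $\gamma=\gamma'$ and $[xt,t^{-1}y]=[x',y']$ for some $t\in T_\gamma$. For an invertible skew-Hermitian $\beta$ ($\beta^*=-\beta$), $\mathrm{U}_n^\beta(F)=\{h:h^*\beta h=\beta\}$; $\zeta$ is normal w.r.t. $\beta$ if it commutes with $\beta^{-1}\zeta^*\beta\zeta$; $R^\beta$ is a set of normal representatives of the regular semisimple orbits of $\mathrm{U}_n^\beta(F)\times\mathrm{U}_n^\beta(F)$ acting on $\mathrm{GL}_n(E)$ by $\zeta.(g,h)=g^{-1}\zeta h$, whose elements satisfy $\beta^{-1}\zeta^*\beta\zeta\in\{\bar a a:a\in\mathrm{GL}_n(E)\}$; $T_\zeta$ is the centralizer of $\zeta$ in $\mathrm{U}_n^\beta(F)$; $Y^\beta=R^\beta\times E_n$, $Y^\beta_{\mathrm{rss}}=\{[\zeta,z]:[\beta^{-1}\zeta^*\beta\zeta,z,\beta^{-1}z^*]\text{ regular semisimple}\}$, and $[\zeta,z]\sim[\zeta',z']$ if $\zeta=\zeta'$ and $zt=z'$ for some $t\in T_\zeta$. *)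

theory Defs
  imports "HOL-Analysis.Analysis" "HOL-Computational_Algebra.Polynomial"
begin

text \<open>The quadratic extension E/F is modelled by a field 'e of characteristic 0 together with
a nontrivial field automorphism cj of order 2 (the Galois involution); F is its fixed field.
n x n matrices are of type 'e^'n^'n ('n a finite index type, n = CARD('n)).
Row vectors (E_n) and column vectors (E^n) are both of type 'e^'n; a row vector x acts
on matrices on the right by  x v* h,  a matrix acts on a column vector y by  h *v y.\<close>

definition quad_involution :: "('e::field_char_0 \<Rightarrow> 'e) \<Rightarrow> bool" where
  "quad_involution cj \<longleftrightarrow>
     (\<forall>a b. cj (a + b) = cj a + cj b) \<and> (\<forall>a b. cj (a * b) = cj a * cj b) \<and> cj 1 = 1 \<and>
     (\<forall>a. cj (cj a) = a) \<and> (\<exists>a. cj a \<noteq> a)"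

definition vbar :: "('e \<Rightarrow> 'e) \<Rightarrow> 'e^'n \<Rightarrow> 'e^'n" where
  "vbar cj v = (\<chi> i. cj (v $ i))"

definition mbar :: "('e \<Rightarrow> 'e) \<Rightarrow> 'e^'n^'m \<Rightarrow> 'e^'n^'m" where
  "mbar cj A = (\<chi> i j. cj (A $ i $ j))"

definition mstar :: "('e \<Rightarrow> 'e) \<Rightarrow> 'e^'n^'m \<Rightarrow> 'e^'m^'n" where
  "mstar cj A = transpose (mbar cj A)"

definition GL :: "('e::field ^'n^'n) set" where
  "GL = {g. invertible g}"

definition Fvecs :: "('e \<Rightarrow> 'e) \<Rightarrow> ('e::field ^'n) set" where
  "Fvecs cj = {x. \<forall>i. cj (x $ i) = x $ i}"

definition Fminus_vecs :: "('e \<Rightarrow> 'e) \<Rightarrow> ('e::field ^'n) set" where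
  "Fminus_vecs cj = {y. \<forall>i. cj (y $ i) = - y $ i}"

definition matpow :: "'e::semiring_1^'n^'n \<Rightarrow> nat \<Rightarrow> 'e^'n^'n" where
  "matpow A k = ((\<lambda>B. B ** A) ^^ k) (mat 1)"

definition charpoly :: "'e::field^'n^'n \<Rightarrow> 'e poly" where
  "charpoly A = det (\<chi> i j. (if i = j then [:0, 1:] else 0) - [:A $ i $ j:])"

text \<open>A matrix is regular semisimple iff its characteristic polynomial has distinct roots
(in an algebraic closure), i.e. is separable: coprime to its derivative.\<close>
definition reg_ss :: "'e::field_char_0^'n^'n \<Rightarrow> bool" where
  "reg_ss A \<longleftrightarrow> coprime (charpoly A) (pderiv (charpoly A))"

definition M_rss :: "'e::field_char_0^'n^'n \<Rightarrow> 'e^'n \<Rightarrow> 'e^'n \<Rightarrow> bool" where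
  "M_rss \<xi> x y \<longleftrightarrow> reg_ss \<xi> \<and>
     vec.span {x v* matpow \<xi> i | i. i < CARD('n)} = UNIV \<and>
     vec.span {matpow \<xi> i *v y | i. i < CARD('n)} = UNIV"

definition same_orbit_M ::
  "(('e::field^'n^'n) \<times> ('e^'n) \<times> ('e^'n)) \<Rightarrow> (('e^'n^'n) \<times> ('e^'n) \<times> ('e^'n)) \<Rightarrow> bool" where
  "same_orbit_M a b \<longleftrightarrow> (\<exists>h \<in> GL. case a of (\<xi>, x, y) \<Rightarrow>
       b = (matrix_inv h ** \<xi> ** h, x v* h, matrix_inv h *v y))"

definition sigma_conj :: "('e \<Rightarrow> 'e) \<Rightarrow> 'e::field^'n^'n \<Rightarrow> 'e^'n^'n \<Rightarrow> bool" where
  "sigma_conj cj \<gamma> \<gamma>' \<longleftrightarrow> (\<exists>g \<in> GL. \<gamma>' = matrix_inv g ** \<gamma> ** mbar cj g)"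

definition normal_sigma :: "('e \<Rightarrow> 'e) \<Rightarrow> 'e::field^'n^'n \<Rightarrow> bool" where
  "normal_sigma cj \<gamma> \<longleftrightarrow> invertible (mbar cj \<gamma> ** \<gamma>) \<and>
      mbar cj (mbar cj \<gamma> ** \<gamma>) = mbar cj \<gamma> ** \<gamma>"

definition is_S :: "('e \<Rightarrow> 'e) \<Rightarrow> ('e::field_char_0^'n^'n) set \<Rightarrow> bool" where
  "is_S cj S \<longleftrightarrow>
     (\<forall>\<gamma> \<in> S. \<gamma> \<in> GL \<and> reg_ss (mbar cj \<gamma> ** \<gamma>) \<and> normal_sigma cj \<gamma>) \<and>
     (\<forall>\<gamma> \<in> GL. reg_ss (mbar cj \<gamma> ** \<gamma>) \<longrightarrow> (\<exists>!\<gamma>0 \<in> S. sigma_conj cj \<gamma> \<gamma>0))"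

definition T_sigma :: "('e \<Rightarrow> 'e) \<Rightarrow> 'e::field^'n^'n \<Rightarrow> ('e^'n^'n) set" where
  "T_sigma cj \<gamma> = {g \<in> GL. matrix_inv g ** \<gamma> ** mbar cj g = \<gamma>}"

definition X_rss :: "('e \<Rightarrow> 'e) \<Rightarrow> ('e::field_char_0^'n^'n) set \<Rightarrow>
    (('e^'n^'n) \<times> ('e^'n) \<times> ('e^'n)) set" where
  "X_rss cj S = {(\<gamma>, x, y). \<gamma> \<in> S \<and> x \<in> Fvecs cj \<and> y \<in> Fminus_vecs cj \<and>
                   M_rss (mbar cj \<gamma> ** \<gamma>) x y}"

definition X_equiv :: "('e \<Rightarrow> 'e) \<Rightarrow> (('e::field^'n^'n) \<times> ('e^'n) \<times> ('e^'n)) \<Rightarrow>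
    (('e^'n^'n) \<times> ('e^'n) \<times> ('e^'n)) \<Rightarrow> bool" where
  "X_equiv cj a b \<longleftrightarrow> (case a of (\<gamma>, x, y) \<Rightarrow> case b of (\<gamma>', x', y') \<Rightarrow>
      \<gamma> = \<gamma>' \<and> (\<exists>t \<in> T_sigma cj \<gamma>. x v* t = x' \<and> matrix_inv t *v y = y'))"

definition skew_herm_inv :: "('e \<Rightarrow> 'e) \<Rightarrow> 'e::field^'n^'n \<Rightarrow> bool" where
  "skew_herm_inv cj \<beta> \<longleftrightarrow> invertible \<beta> \<and> mstar cj \<beta> = - \<beta>"

definition U :: "('e \<Rightarrow> 'e) \<Rightarrow> 'e::field^'n^'n \<Rightarrow> ('e^'n^'n) set" where
  "U cj \<beta> = {h. mstar cj h ** \<beta> ** h = \<beta>}"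

definition Nb :: "('e \<Rightarrow> 'e) \<Rightarrow> 'e::field^'n^'n \<Rightarrow> 'e^'n^'n \<Rightarrow> 'e^'n^'n" where
  "Nb cj \<beta> \<zeta> = matrix_inv \<beta> ** mstar cj \<zeta> ** \<beta> ** \<zeta>"

definition normal_beta :: "('e \<Rightarrow> 'e) \<Rightarrow> 'e::field^'n^'n \<Rightarrow> 'e^'n^'n \<Rightarrow> bool" where
  "normal_beta cj \<beta> \<zeta> \<longleftrightarrow> \<zeta> ** Nb cj \<beta> \<zeta> = Nb cj \<beta> \<zeta> ** \<zeta>"

definition UU_orbit :: "('e \<Rightarrow> 'e) \<Rightarrow> 'e::field^'n^'n \<Rightarrow> 'e^'n^'n \<Rightarrow> 'e^'n^'n \<Rightarrow> bool" where
  "UU_orbit cj \<beta> \<zeta> \<zeta>' \<longleftrightarrow> (\<exists>g \<in> U cj \<beta>. \<exists>h \<in> U cj \<beta>. \<zeta>' = matrix_inv g ** \<zeta> ** h)"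

definition UU_rss :: "('e \<Rightarrow> 'e) \<Rightarrow> 'e::field_char_0^'n^'n \<Rightarrow> 'e^'n^'n \<Rightarrow> bool" where
  "UU_rss cj \<beta> \<zeta> \<longleftrightarrow> \<zeta> \<in> GL \<and> reg_ss (Nb cj \<beta> \<zeta>)"

definition norm_image :: "('e \<Rightarrow> 'e) \<Rightarrow> ('e::field^'n^'n) set" where
  "norm_image cj = {mbar cj a ** a | a. a \<in> GL}"

definition is_R :: "('e \<Rightarrow> 'e) \<Rightarrow> 'e::field_char_0^'n^'n \<Rightarrow> ('e^'n^'n) set \<Rightarrow> bool" where
  "is_R cj \<beta> R \<longleftrightarrow>
     (\<forall>\<zeta> \<in> R. UU_rss cj \<beta> \<zeta> \<and> normal_beta cj \<beta> \<zeta> \<and> Nb cj \<beta> \<zeta> \<in> norm_image cj) \<and>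
     (\<forall>\<zeta>. UU_rss cj \<beta> \<zeta> \<and> Nb cj \<beta> \<zeta> \<in> norm_image cj \<longrightarrow>
           (\<exists>!\<zeta>0 \<in> R. UU_orbit cj \<beta> \<zeta> \<zeta>0))"

definition T_U :: "('e \<Rightarrow> 'e) \<Rightarrow> 'e::field^'n^'n \<Rightarrow> 'e^'n^'n \<Rightarrow> ('e^'n^'n) set" where
  "T_U cj \<beta> \<zeta> = {t \<in> U cj \<beta>. t ** \<zeta> = \<zeta> ** t}"

definition Mtriple_Y :: "('e \<Rightarrow> 'e) \<Rightarrow> 'e::field^'n^'n \<Rightarrow> 'e^'n^'n \<Rightarrow> 'e^'n \<Rightarrow>
    (('e^'n^'n) \<times> ('e^'n) \<times> ('e^'n))" where
  "Mtriple_Y cj \<beta> \<zeta> z = (Nb cj \<beta> \<zeta>, z, matrix_inv \<beta> *v vbar cj z)"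

definition Y_rss :: "('e \<Rightarrow> 'e) \<Rightarrow> 'e::field_char_0^'n^'n \<Rightarrow> ('e^'n^'n) set \<Rightarrow>
    (('e^'n^'n) \<times> ('e^'n)) set" where
  "Y_rss cj \<beta> R = {(\<zeta>, z). \<zeta> \<in> R \<and>
       (case Mtriple_Y cj \<beta> \<zeta> z of (\<xi>, x, y) \<Rightarrow> M_rss \<xi> x y)}"

definition Y_equiv :: "('e \<Rightarrow> 'e) \<Rightarrow> 'e::field^'n^'n \<Rightarrow> (('e^'n^'n) \<times> ('e^'n)) \<Rightarrow>
    (('e^'n^'n) \<times> ('e^'n)) \<Rightarrow> bool" where
  "Y_equiv cj \<beta> a b \<longleftrightarrow> (case a of (\<zeta>, z) \<Rightarrow> case b of (\<zeta>', z') \<Rightarrow>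
      \<zeta> = \<zeta>' \<and> (\<exists>t \<in> T_U cj \<beta> \<zeta>. z v* t = z'))"

end

theory Submission
  imports Defs
begin


lemma minv_ok:
  fixes A :: "'a::field^'n^'n"
  assumes "invertible A"
  shows "A ** matrix_inv A = mat 1" "matrix_inv A ** A = mat 1"
proof -
  have "\<exists>A'. A ** A' = mat 1 \<and> A' ** A = mat 1" using assms invertible_def by blast
  hence "A ** matrix_inv A = mat 1 \<and> matrix_inv A ** A = mat 1"
    unfolding matrix_inv_def by (rule someI_ex)
  thus "A ** matrix_inv A = mat 1" "matrix_inv A ** A = mat 1" by auto
qed

lemma minv_unique:
  fixes A B :: "'a::field^'n^'n"
  assumes "A ** B = mat 1"
  shows "matrix_inv A = B"
proof -
  have BA: "B ** A = mat 1" using assms matrix_left_right_inverse by blast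
  hence inv: "invertible A" using assms invertible_def by blast
  have "matrix_inv A = matrix_inv A ** (A ** B)" using assms by simp
  also have "\<dots> = B" by (simp add: matrix_mul_assoc minv_ok[OF inv])
  finally show ?thesis .
qed

lemma invertible_minv:
  fixes A :: "'a::field^'n^'n"
  assumes "invertible A" shows "invertible (matrix_inv A)"
  using minv_ok[OF assms] invertible_def by blast

lemma minv_minv:
  fixes A :: "'a::field^'n^'n"
  assumes "invertible A" shows "matrix_inv (matrix_inv A) = A"
  using minv_ok[OF assms] minv_unique by blast

lemma minv_mult:
  fixes A B :: "'a::field^'n^'n"
  assumes "invertible A" "invertible B"
  shows "matrix_inv (A ** B) = matrix_inv B ** matrix_inv A"
proof (rule minv_unique)
  have "A ** B ** (matrix_inv B ** matrix_inv A) = A ** (B ** matrix_inv B) ** matrix_inv A"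
    by (simp add: matrix_mul_assoc)
  thus "A ** B ** (matrix_inv B ** matrix_inv A) = mat 1"
    by (simp add: minv_ok assms)
qed

lemma minv_I: "matrix_inv (mat 1 :: 'a::field^'n^'n) = mat 1"
  by (rule minv_unique) simp

lemma cancel_left:
  fixes A X Y :: "'a::field^'n^'n"
  assumes "invertible A"
  shows "A ** X = A ** Y \<longleftrightarrow> X = Y"
  by (metis assms matrix_mul_assoc matrix_mul_lid minv_ok(2))

lemma cancel_right:
  fixes A X Y :: "'a::field^'n^'n"
  assumes "invertible A"
  shows "X ** A = Y ** A \<longleftrightarrow> X = Y"
  by (metis assms matrix_mul_assoc matrix_mul_rid minv_ok(1))

lemma conj_eq_iff:
  fixes A X Y :: "'a::field^'n^'n"
  assumes "invertible A"
  shows "matrix_inv A ** X ** A = Y \<longleftrightarrow> X ** A = A ** Y"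
proof -
  have "matrix_inv A ** X ** A = Y \<longleftrightarrow> A ** (matrix_inv A ** X ** A) = A ** Y"
    using cancel_left[OF assms] by blast
  also have "A ** (matrix_inv A ** X ** A) = X ** A"
    by (simp add: matrix_mul_assoc minv_ok[OF assms])
  finally show ?thesis .
qed

lemma mat_mul_neg_left: "(- A) ** B = - (A ** (B::'a::ring_1^'n^'n))"
  by (simp add: matrix_matrix_mult_def vec_eq_iff sum_negf)
lemma mat_mul_neg_right: "A ** (- B) = - (A ** (B::'a::ring_1^'n^'n))"
  by (simp add: matrix_matrix_mult_def vec_eq_iff sum_negf)

lemma minv_neg:
  fixes A :: "'a::field^'n^'n"
  assumes "invertible A" shows "matrix_inv (- A) = - matrix_inv A"
  by (rule minv_unique) (simp add: mat_mul_neg_left mat_mul_neg_right minv_ok assms)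

lemma vm_eq:
  fixes A B :: "'a::field^'n^'n"
  assumes "\<And>v. v v* A = v v* B" shows "A = B"
proof -
  have "transpose A = transpose B"
    using assms by (simp add: matrix_eq)
  thus ?thesis by simp
qed

lemma mat_mult_comm:
  fixes A :: "'a::comm_ring_1^'n^'n"
  shows "mat c ** A = A ** mat c"
  by (simp add: matrix_matrix_mult_def mat_def vec_eq_iff if_distrib if_distribR mult.commute cong: if_cong)

lemma matpow_Suc: "matpow A (Suc k) = matpow A k ** A"
  by (simp add: matpow_def)
lemma matpow_0: "matpow A 0 = mat 1"
  by (simp add: matpow_def)

lemma matpow_comm:
  fixes A B :: "'a::comm_ring_1^'n^'n"
  assumes "B ** A = A ** B" shows "B ** matpow A k = matpow A k ** B"
proof (induction k)
  case 0 then show ?case by (simp add: matpow_0)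
next
  case (Suc k)
  have "B ** matpow A (Suc k) = (B ** matpow A k) ** A" by (simp add: matpow_Suc matrix_mul_assoc)
  also have "\<dots> = matpow A k ** (B ** A)" using Suc by (simp add: matrix_mul_assoc)
  also have "\<dots> = matpow A (Suc k) ** B" using assms by (simp add: matpow_Suc matrix_mul_assoc)
  finally show ?case .
qed




lemma vm_mat: "(x::'a::comm_ring_1^'n) v* mat c = c *s x"
  by (simp add: vector_matrix_mult_def mat_def vec_eq_iff if_distrib if_distribR mult.commute cong: if_cong)

lemma mat_add_rdistrib: "(A + B) ** C = A ** C + B ** (C::'a::semiring_1^'n^'n)"
  by (simp add: matrix_matrix_mult_def vec_eq_iff sum.distrib distrib_right)

definition cyc :: "'a::field^'n^'n \<Rightarrow> 'a^'n \<Rightarrow> bool" where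
  "cyc \<xi> x \<longleftrightarrow> vec.span {x v* matpow \<xi> i | i. i < CARD('n)} = UNIV"

lemma cyc_span:
  assumes "cyc \<xi> x" "vec.subspace P" "\<And>i. x v* matpow \<xi> i \<in> P"
  shows "v \<in> P"
proof -
  have "vec.span {x v* matpow \<xi> i | i. i < CARD('n)} \<subseteq> P"
    by (rule vec.span_minimal) (use assms(2,3) in auto)
  thus ?thesis using assms(1) unfolding cyc_def by auto
qed

lemma cyc_eq:
  fixes \<xi> A B :: "'a::field^'n^'n"
  assumes "cyc \<xi> x" "\<And>i. (x v* matpow \<xi> i) v* A = (x v* matpow \<xi> i) v* B"
  shows "A = B"
proof (rule vm_eq)
  fix v
  have "v \<in> {v. v v* A = v v* B}"
  proof (rule cyc_span[OF assms(1)])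
    show "vec.subspace {v. v v* A = v v* B}"
      by (rule vec.subspaceI) (auto simp: vector_matrix_left_distrib scalar_vector_matrix_assoc)
  qed (use assms(2) in auto)
  thus "v v* A = v v* B" by simp
qed

lemma cyc_stab:
  fixes \<xi> A :: "'a::field^'n^'n"
  assumes "cyc \<xi> x" "A ** \<xi> = \<xi> ** A" "x v* A = x"
  shows "A = mat 1"
proof (rule cyc_eq[OF assms(1)])
  fix i
  have "(x v* matpow \<xi> i) v* A = (x v* A) v* matpow \<xi> i"
    using matpow_comm[OF assms(2), of i] by (simp add: vector_matrix_mul_assoc)
  thus "(x v* matpow \<xi> i) v* A = (x v* matpow \<xi> i) v* mat 1" using assms(3) by simp
qed

lemma cyc_poly:
  fixes \<xi> A :: "'a::field^'n^'n"
  assumes "cyc \<xi> x"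
  shows "\<exists>P. (\<forall>B. B ** \<xi> = \<xi> ** B \<longrightarrow> P ** B = B ** P) \<and> x v* A = x v* P"
proof -
  let ?Q = "{v. \<exists>P. (\<forall>B. B ** \<xi> = \<xi> ** B \<longrightarrow> P ** B = B ** P) \<and> v = x v* P}"
  have "x v* A \<in> ?Q"
  proof (rule cyc_span[OF assms(1)])
    show "vec.subspace ?Q"
    proof (rule vec.subspaceI)
      show "0 \<in> ?Q" by (rule CollectI, rule exI[of _ 0]) simp
    next
      fix u v assume "u \<in> ?Q" "v \<in> ?Q"
      then obtain P1 P2 where P1: "\<forall>B. B ** \<xi> = \<xi> ** B \<longrightarrow> P1 ** B = B ** P1" "u = x v* P1"
        and P2: "\<forall>B. B ** \<xi> = \<xi> ** B \<longrightarrow> P2 ** B = B ** P2" "v = x v* P2" by blast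
      show "u + v \<in> ?Q"
        by (rule CollectI, rule exI[of _ "P1 + P2"])
          (use P1 P2 in \<open>simp add: vector_matrix_mult_add_rdistrib matrix_add_ldistrib mat_add_rdistrib\<close>)
    next
      fix c u assume "u \<in> ?Q"
      then obtain P1 where P1: "\<forall>B. B ** \<xi> = \<xi> ** B \<longrightarrow> P1 ** B = B ** P1" "u = x v* P1" by blast
      have "c *s u = x v* (P1 ** mat c)"
        using P1(2) by (simp add: vector_matrix_mul_assoc[symmetric] vm_mat)
      moreover have "\<forall>B. B ** \<xi> = \<xi> ** B \<longrightarrow> (P1 ** mat c) ** B = B ** (P1 ** mat c)"
      proof (intro allI impI)
        fix B assume "B ** \<xi> = \<xi> ** B"
        hence "P1 ** B = B ** P1" using P1(1) by blast
        have "(P1 ** mat c) ** B = P1 ** (B ** mat c)" by (simp only: matrix_mul_assoc[symmetric] mat_mult_comm)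
        also have "\<dots> = B ** (P1 ** mat c)" by (simp only: matrix_mul_assoc \<open>P1 ** B = B ** P1\<close>)
        finally show "(P1 ** mat c) ** B = B ** (P1 ** mat c)" .
      qed
      ultimately show "c *s u \<in> ?Q" by blast
    qed
  next
    fix i show "x v* matpow \<xi> i \<in> ?Q"
    proof (rule CollectI, rule exI[of _ "matpow \<xi> i"], intro conjI allI impI refl)
      fix B assume "B ** \<xi> = \<xi> ** B"
      thus "matpow \<xi> i ** B = B ** matpow \<xi> i" using matpow_comm[of B \<xi> i] by simp
    qed
  qed
  thus ?thesis by auto
qed

lemma cyc_comm:
  fixes \<xi> A B :: "'a::field^'n^'n"
  assumes "cyc \<xi> x" "A ** \<xi> = \<xi> ** A" "B ** \<xi> = \<xi> ** B"
  shows "A ** B = B ** A"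
proof (rule cyc_eq[OF assms(1)])
  obtain P where P: "\<forall>C. C ** \<xi> = \<xi> ** C \<longrightarrow> P ** C = C ** P" "x v* A = x v* P"
    using cyc_poly[OF assms(1)] by blast
  obtain Q where Q: "\<forall>C. C ** \<xi> = \<xi> ** C \<longrightarrow> Q ** C = C ** Q" "x v* B = x v* Q"
    using cyc_poly[OF assms(1)] by blast
  have PB: "P ** B = B ** P" using P(1) assms(3) by blast
  have QA: "Q ** A = A ** Q" using Q(1) assms(2) by blast
  have Pxi: "P ** \<xi> = \<xi> ** P" using P(1) by blast
  have PQ: "Q ** P = P ** Q" using Q(1) Pxi by blast
  have AB: "x v* (A ** B) = x v* (B ** A)"
  proof -
    have "x v* (A ** B) = (x v* A) v* B" by (simp only: vector_matrix_mul_assoc)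
    also have "\<dots> = x v* (P ** B)" by (simp only: P(2) vector_matrix_mul_assoc)
    also have "\<dots> = (x v* B) v* P" by (simp only: PB vector_matrix_mul_assoc)
    also have "\<dots> = x v* (Q ** P)" by (simp only: Q(2) vector_matrix_mul_assoc)
    also have "\<dots> = (x v* P) v* Q" by (simp only: PQ vector_matrix_mul_assoc)
    also have "\<dots> = x v* (A ** Q)" by (simp only: P(2) vector_matrix_mul_assoc[symmetric])
    also have "\<dots> = (x v* B) v* A" by (simp only: QA[symmetric] Q(2) vector_matrix_mul_assoc)
    also have "\<dots> = x v* (B ** A)" by (simp only: vector_matrix_mul_assoc)
    finally show ?thesis .
  qed
  have ABxi: "(A ** B) ** \<xi> = \<xi> ** (A ** B)"
    by (metis matrix_mul_assoc assms(2,3))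
  have BAxi: "(B ** A) ** \<xi> = \<xi> ** (B ** A)"
    by (metis matrix_mul_assoc assms(2,3))
  fix i
  have "(x v* matpow \<xi> i) v* (A ** B) = x v* (matpow \<xi> i ** (A ** B))"
    by (simp only: vector_matrix_mul_assoc)
  also have "\<dots> = (x v* (A ** B)) v* matpow \<xi> i"
    by (simp only: matpow_comm[OF ABxi, of i, symmetric] vector_matrix_mul_assoc)
  also have "\<dots> = (x v* (B ** A)) v* matpow \<xi> i" by (simp only: AB)
  also have "\<dots> = (x v* matpow \<xi> i) v* (B ** A)"
    by (simp only: matpow_comm[OF BAxi, of i] vector_matrix_mul_assoc)
  finally show "(x v* matpow \<xi> i) v* (A ** B) = (x v* matpow \<xi> i) v* (B ** A)" .
qed




locale qi =
  fixes cj :: "'e::field_char_0 \<Rightarrow> 'e"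
  assumes add: "cj (a + b) = cj a + cj b" and mul: "cj (a * b) = cj a * cj b"
    and one: "cj 1 = 1" and inv: "cj (cj a) = a" and nontriv: "\<exists>a. cj a \<noteq> a"
begin

lemma zero[simp]: "cj 0 = 0"
  using add[of 0 0] by simp

lemma neg[simp]: "cj (- a) = - cj a"
proof -
  have "cj a + cj (-a) = 0" using add[of a "-a"] by simp
  from add.inverse_unique[OF this] show ?thesis by simp
qed

lemma sum: "cj (sum f A) = sum (\<lambda>i. cj (f i)) A"
  by (induction A rule: infinite_finite_induct) (auto simp: add)

lemma mbar_mult: "mbar cj (A ** B) = mbar cj A ** mbar cj (B::'e^'n^'n)"
  by (simp add: mbar_def matrix_matrix_mult_def vec_eq_iff sum mul)

lemma mbar_mat: "mbar cj (mat c :: 'e^'n^'n) = mat (cj c)"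
  by (simp add: mbar_def mat_def vec_eq_iff)

lemma mbar_add: "mbar cj (A + B) = mbar cj A + mbar cj (B::'e^'n^'n)"
  by (simp add: mbar_def vec_eq_iff add)

lemma mbar_neg: "mbar cj (- A) = - mbar cj (A::'e^'n^'n)"
  by (simp add: mbar_def vec_eq_iff)

lemma mbar_mbar[simp]: "mbar cj (mbar cj A) = (A::'e^'n^'n)"
  by (simp add: mbar_def vec_eq_iff inv)

lemma mbar_inv:
  assumes "invertible (A::'e^'n^'n)"
  shows "invertible (mbar cj A)" "mbar cj (matrix_inv A) = matrix_inv (mbar cj A)"
proof -
  have "mbar cj A ** mbar cj (matrix_inv A) = mat 1"
    by (simp add: mbar_mult[symmetric] minv_ok assms mbar_mat one)
  thus "mbar cj (matrix_inv A) = matrix_inv (mbar cj A)" using minv_unique by fastforce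
  show "invertible (mbar cj A)"
    using \<open>mbar cj A ** mbar cj (matrix_inv A) = mat 1\<close> invertible_right_inverse by blast
qed

lemma vbar_vm: "vbar cj (x v* A) = vbar cj x v* mbar cj (A::'e^'n^'n)"
  by (simp add: vbar_def mbar_def vector_matrix_mult_def vec_eq_iff sum mul)

lemma vbar_mv: "vbar cj (A *v x) = mbar cj (A::'e^'n^'n) *v vbar cj x"
  by (simp add: vbar_def mbar_def matrix_vector_mult_def vec_eq_iff sum mul)

lemma vbar_vbar[simp]: "vbar cj (vbar cj x) = x"
  by (simp add: vbar_def vec_eq_iff inv)

lemma transpose_inv:
  assumes "invertible (A::'e^'n^'n)"
  shows "invertible (transpose A)" "matrix_inv (transpose A) = transpose (matrix_inv A)"
proof -
  have "transpose A ** transpose (matrix_inv A) = mat 1"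
    by (simp add: matrix_transpose_mul[symmetric] minv_ok assms)
  thus "matrix_inv (transpose A) = transpose (matrix_inv A)" using minv_unique by fastforce
  show "invertible (transpose A)"
    using \<open>transpose A ** transpose (matrix_inv A) = mat 1\<close> invertible_right_inverse by blast
qed

lemma mbar_transpose: "mbar cj (transpose A) = transpose (mbar cj (A::'e^'n^'n))"
  by (simp add: mbar_def transpose_def vec_eq_iff)

lemma mstar_mult: "mstar cj (A ** B) = mstar cj (B::'e^'n^'n) ** mstar cj (A::'e^'n^'n)"
  by (simp only: mstar_def mbar_mult matrix_transpose_mul)

lemma mstar_mstar[simp]: "mstar cj (mstar cj A) = (A::'e^'n^'n)"
  by (simp add: mstar_def mbar_transpose)

lemma mstar_neg: "mstar cj (- A) = - mstar cj (A::'e^'n^'n)"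
  by (simp add: mstar_def mbar_neg transpose_def vec_eq_iff)

lemma mstar_mat: "mstar cj (mat 1 :: 'e^'n^'n) = mat 1"
  by (simp add: mstar_def mbar_mat one)

lemma mstar_inv:
  assumes "invertible (A::'e^'n^'n)"
  shows "invertible (mstar cj A)" "mstar cj (matrix_inv A) = matrix_inv (mstar cj A)"
  using mbar_inv[OF assms] transpose_inv[OF mbar_inv(1)[OF assms]]
  by (auto simp: mstar_def)

lemma vbar_vm_star: "vbar cj (z v* h) = mstar cj (h::'e^'n^'n) *v vbar cj z"
  by (simp add: vbar_vm mstar_def)

lemma vbar_mv_star: "vbar cj (h *v z) = vbar cj z v* mstar cj (h::'e^'n^'n)"
  by (simp add: vbar_mv mstar_def)

end

lemma qi_from: "quad_involution cj \<Longrightarrow> qi cj"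
  unfolding quad_involution_def qi_def by blast




lemma poly_det: "poly (det M) t = det (\<chi> i j. poly (M$i$j) t)"
  by (simp add: det_def poly_sum poly_prod)

lemma mat_add: "mat a + mat b = (mat (a + b) :: 'a::semiring_1^'n^'n)"
  by (simp add: mat_def vec_eq_iff)

lemma mat_mul_mat: "mat a ** mat b = (mat (a * b) :: 'a::semiring_1^'n^'n)"
proof -
  have "(mat a ** mat b :: 'a^'n^'n) $ i $ j = mat (a * b) $ i $ j" for i j
  proof -
    have "(mat a ** mat b :: 'a^'n^'n) $ i $ j = (\<Sum>k\<in>UNIV. (if i = k then a else 0) * (if k = j then b else 0))"
      by (simp add: matrix_matrix_mult_def mat_def)
    also have "\<dots> = (\<Sum>k\<in>UNIV. if k = i then a * (if k = j then b else 0) else 0)"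
      by (rule sum.cong) auto
    also have "\<dots> = mat (a * b) $ i $ j" by (simp add: mat_def)
    finally show ?thesis .
  qed
  thus ?thesis by (simp add: vec_eq_iff)
qed


lemma invertible_mat: "(c::'a::field) \<noteq> 0 \<Longrightarrow> invertible (mat c :: 'a^'n^'n)"
  unfolding invertible_right_inverse by (rule exI[of _ "mat (1/c)"]) (simp add: mat_mul_mat)

lemma finite_bad:
  fixes a :: "'a::field^'n^'n"
  assumes "invertible a"
  shows "finite {t. \<not> invertible (mat t + a)}"
proof -
  define p where "p = det (\<chi> i j. [:a$i$j, if i = j then 1 else 0:])"
  have pe: "poly p t = det (mat t + a)" for t
    unfolding p_def poly_det
    by (rule arg_cong[where f=det]) (simp add: vec_eq_iff mat_def)
  have "poly p 0 \<noteq> 0" using pe[of 0] assms by (simp add: invertible_det_nz)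
  hence "p \<noteq> 0" by auto
  hence "finite {t. poly p t = 0}" by (rule poly_roots_finite)
  thus ?thesis by (simp add: pe invertible_det_nz)
qed

context qi begin

lemma of_nat_cj: "cj (of_nat k) = of_nat k"
  by (induction k) (auto simp: add one)

lemma hilbert90:
  fixes a :: "'e^'n^'n"
  assumes "invertible a"
  shows "\<exists>\<theta>. invertible (mat \<theta> + mat (cj \<theta>) ** a)"
proof -
  obtain b where b: "cj b \<noteq> b" using nontriv by blast
  define \<delta> where "\<delta> = b - cj b"
  have "cj (b + - cj b) = cj b + - b" by (simp only: add neg inv)
  hence cd: "cj \<delta> = - \<delta>" unfolding \<delta>_def by simp
  have dnz: "\<delta> \<noteq> 0" using b unfolding \<delta>_def by simp
  define th where "th k = 1 + of_nat k * \<delta>" for k :: nat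
  have cth: "cj (th k) = 1 - of_nat k * \<delta>" for k
    unfolding th_def by (simp add: add one mul of_nat_cj cd)
  have cthnz: "cj (th k) \<noteq> 0" for k
  proof
    assume "cj (th k) = 0"
    hence "cj (cj (th k)) = 0" by simp
    hence "th k = 0" by (simp add: inv)
    hence a2: "1 + of_nat k * \<delta> = 0" by (simp add: th_def)
    have a1: "1 - of_nat k * \<delta> = 0" using \<open>cj (th k) = 0\<close> cth[of k] by simp
    note a1 a2
    have "(2::'e) = (1 - of_nat k * \<delta>) + (1 + of_nat k * \<delta>)" by algebra
    also have "\<dots> = 0" by (simp only: a1 a2 add_0_left)
    finally have "(2::'e) = 0" .
    thus False by simp
  qed
  define tt where "tt k = th k / cj (th k)" for k
  have "inj tt"
  proof (rule injI)
    fix k m assume "tt k = tt m"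
    hence e: "th k * cj (th m) = th m * cj (th k)"
      using cthnz unfolding tt_def by (simp add: frac_eq_eq)
    define p where "p = (of_nat k * \<delta> :: 'e)"
    define q where "q = (of_nat m * \<delta> :: 'e)"
    have "(1 + p) * (1 - q) = (1 + q) * (1 - p)"
      using e[unfolded cth] by (simp add: th_def p_def q_def)
    moreover have "(1 + p) * (1 - q) - (1 + q) * (1 - p) = 2 * (p - q)" by algebra
    ultimately have "2 * (p - q) = 0" by simp
    hence "p = q" by simp
    hence "(of_nat k :: 'e) = of_nat m" using dnz unfolding p_def q_def by simp
    thus "k = m" by simp
  qed
  hence "infinite (range tt)" by (simp add: finite_image_iff)
  hence "\<not> range tt \<subseteq> {t. \<not> invertible (mat t + a)}"
    using finite_bad[OF assms] finite_subset by blast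
  then obtain k where k: "invertible (mat (tt k) + a)" by blast
  have "mat (th k) + mat (cj (th k)) ** a = mat (cj (th k)) ** (mat (tt k) + a)"
    using cthnz by (simp add: matrix_add_ldistrib mat_mul_mat tt_def)
  moreover have "invertible (mat (cj (th k)) ** (mat (tt k) + a))"
    by (rule invertible_mult[OF invertible_mat[OF cthnz] k])
  ultimately show ?thesis by metis
qed

end



lemma ic1: "invertible (A::'a::field^'n^'n) \<Longrightarrow> X ** A ** matrix_inv A = (X::'a::field^'n^'n)"
proof -
  assume a: "invertible A"
  have "X ** A ** matrix_inv A = X ** (A ** matrix_inv A)" by (simp only: matrix_mul_assoc)
  thus ?thesis by (simp only: minv_ok(1)[OF a] matrix_mul_rid)
qed
lemma ic2: "invertible (A::'a::field^'n^'n) \<Longrightarrow> X ** matrix_inv A ** A = (X::'a::field^'n^'n)"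
proof -
  assume a: "invertible A"
  have "X ** matrix_inv A ** A = X ** (matrix_inv A ** A)" by (simp only: matrix_mul_assoc)
  thus ?thesis by (simp only: minv_ok(2)[OF a] matrix_mul_rid)
qed

lemmas msimps = matrix_mul_assoc ic1 ic2 minv_ok mat_mul_neg_left mat_mul_neg_right

lemma lift2: "(A::'a::semiring_1^'n^'n) ** (B::'a^'n^'n) = (D::'a::semiring_1^'n^'n) \<Longrightarrow> X ** A ** B = X ** D"
  by (simp add: matrix_mul_assoc[symmetric])
lemma lift3: "(A::'a::semiring_1^'n^'n) ** (B::'a^'n^'n) ** (C::'a^'n^'n) = (D::'a::semiring_1^'n^'n) \<Longrightarrow> X ** A ** B ** C = X ** D"
  by (simp add: matrix_mul_assoc[symmetric])

lemma vm_neg: "(- v) v* A = - (v v* (A::'a::ring_1^'n^'n))"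
  by (simp add: vector_matrix_mult_def vec_eq_iff sum_negf)
lemma vm_negm: "v v* (- A) = - (v v* (A::'a::ring_1^'n^'n))"
  by (simp add: vector_matrix_mult_def vec_eq_iff sum_negf)

lemma U_inv:
  fixes \<beta> t :: "'e::field^'n^'n"
  assumes "invertible \<beta>" "mstar cj t ** \<beta> ** t = \<beta>"
  shows "invertible t" "matrix_inv t = matrix_inv \<beta> ** mstar cj t ** \<beta>"
proof -
  have "(matrix_inv \<beta> ** mstar cj t ** \<beta>) ** t = mat 1"
    using assms by (simp add: matrix_mul_assoc[symmetric] minv_ok)
  hence "t ** (matrix_inv \<beta> ** mstar cj t ** \<beta>) = mat 1" using matrix_left_right_inverse by blast
  thus "invertible t" "matrix_inv t = matrix_inv \<beta> ** mstar cj t ** \<beta>"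
    using minv_unique invertible_right_inverse by blast+
qed

context qi begin

lemma Nb_star:
  fixes \<beta> \<zeta> :: "'e^'n^'n"
  assumes sk: "skew_herm_inv cj \<beta>"
  shows "\<beta> ** Nb cj \<beta> \<zeta> = mstar cj (Nb cj \<beta> \<zeta>) ** \<beta>"
proof -
  have ib: "invertible \<beta>" and bs: "mstar cj \<beta> = - \<beta>" using sk by (auto simp: skew_herm_inv_def)
  have ibs: "mstar cj (matrix_inv \<beta>) = - matrix_inv \<beta>"
    using mstar_inv[OF ib] bs minv_neg[OF ib] by simp
  have "mstar cj (Nb cj \<beta> \<zeta>) = mstar cj \<zeta> ** \<beta> ** \<zeta> ** matrix_inv \<beta>"
    unfolding Nb_def by (simp only: mstar_mult ibs bs mstar_mstar matrix_mul_assoc mat_mul_neg_left mat_mul_neg_right minus_minus)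
  thus ?thesis unfolding Nb_def by (simp only: matrix_mul_assoc ic1[OF ib] ic2[OF ib] minv_ok[OF ib] matrix_mul_lid)
qed

lemma partB_fwd:
  fixes \<beta> \<zeta> t :: "'e^'n^'n"
  assumes sk: "skew_herm_inv cj \<beta>" and tU: "t \<in> U cj \<beta>" and tc: "t ** \<zeta> = \<zeta> ** t"
  shows "same_orbit_M (Mtriple_Y cj \<beta> \<zeta> z) (Mtriple_Y cj \<beta> \<zeta> (z v* t))"
proof -
  have ib: "invertible \<beta>" using sk by (auto simp: skew_herm_inv_def)
  have tu: "mstar cj t ** \<beta> ** t = \<beta>" using tU by (simp add: U_def)
  note ti = U_inv[OF ib tu]
  have sc: "mstar cj t ** mstar cj \<zeta> = mstar cj \<zeta> ** mstar cj t"
    by (simp only: mstar_mult[symmetric] tc)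
  have tu': "X ** mstar cj t ** \<beta> ** t = X ** \<beta>" for X using lift3[OF tu] .
  have sc': "X ** mstar cj t ** mstar cj \<zeta> = X ** mstar cj \<zeta> ** mstar cj t" for X
    using lift2[OF sc] by (simp add: matrix_mul_assoc)
  have tc': "X ** \<zeta> ** t = X ** t ** \<zeta>" for X
    using lift2[OF tc[symmetric]] by (simp add: matrix_mul_assoc)
  have N: "matrix_inv t ** Nb cj \<beta> \<zeta> ** t = Nb cj \<beta> \<zeta>"
  proof -
    have "matrix_inv t ** Nb cj \<beta> \<zeta> ** t
        = matrix_inv \<beta> ** mstar cj t ** mstar cj \<zeta> ** \<beta> ** \<zeta> ** t"
      unfolding ti(2) Nb_def by (simp only: matrix_mul_assoc ic1[OF ib])
    also have "\<dots> = matrix_inv \<beta> ** mstar cj \<zeta> ** mstar cj t ** \<beta> ** t ** \<zeta>"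
      by (simp only: sc' tc')
    also have "\<dots> = Nb cj \<beta> \<zeta>" unfolding Nb_def by (simp only: tu')
    finally show ?thesis .
  qed
  have V: "matrix_inv t *v (matrix_inv \<beta> *v vbar cj z) = matrix_inv \<beta> *v vbar cj (z v* t)"
    unfolding ti(2) vbar_vm_star by (simp only: matrix_vector_mul_assoc matrix_mul_assoc ic1[OF ib])
  show ?thesis unfolding same_orbit_M_def Mtriple_Y_def
  proof (rule bexI[of _ t])
    show "t \<in> GL" using ti(1) by (simp add: GL_def)
  qed (simp only: prod.case N V)
qed

end



context qi begin

lemma partB_rev:
  fixes \<beta> \<zeta> \<zeta>' h :: "'e^'n^'n" and z z' :: "'e^'n"
  assumes sk: "skew_herm_inv cj \<beta>"
    and iz: "invertible \<zeta>" and iz': "invertible \<zeta>'" and ih: "invertible h"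
    and cy: "cyc (Nb cj \<beta> \<zeta>) z"
    and e1: "Nb cj \<beta> \<zeta>' = matrix_inv h ** Nb cj \<beta> \<zeta> ** h"
    and e2: "z' = z v* h"
    and e3: "matrix_inv \<beta> *v vbar cj z' = matrix_inv h *v (matrix_inv \<beta> *v vbar cj z)"
  shows "h \<in> U cj \<beta>" "UU_orbit cj \<beta> \<zeta> \<zeta>'"
proof -
  have ib: "invertible \<beta>" and bs: "mstar cj \<beta> = - \<beta>" using sk by (auto simp: skew_herm_inv_def)
  have ibs: "mstar cj (matrix_inv \<beta>) = - matrix_inv \<beta>"
    using mstar_inv[OF ib] bs minv_neg[OF ib] by simp
  define N where "N = Nb cj \<beta> \<zeta>"
  define N' where "N' = Nb cj \<beta> \<zeta>'"
  define ibe where "ibe = matrix_inv \<beta>"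
  define hi where "hi = matrix_inv h"
  define hs where "hs = mstar cj h"
  have ihs: "invertible hs" unfolding hs_def by (rule mstar_inv(1)[OF ih])
  have shi: "mstar cj hi = matrix_inv hs" unfolding hi_def hs_def by (rule mstar_inv(2)[OF ih])
  have NS: "\<beta> ** N = mstar cj N ** \<beta>" unfolding N_def by (rule Nb_star[OF sk])
  have NS': "\<beta> ** N' = mstar cj N' ** \<beta>" unfolding N'_def by (rule Nb_star[OF sk])
  have e1': "N ** h = h ** N'"
    unfolding N_def N'_def e1 by (simp only: matrix_mul_assoc minv_ok(1)[OF ih] matrix_mul_lid)
  define m2 where "m2 = h ** ibe ** hs ** \<beta>"
  have zz: "z' v* ibe = (z v* ibe) v* matrix_inv hs"
  proof -
    have "vbar cj (matrix_inv \<beta> *v vbar cj z') = vbar cj (matrix_inv h *v (matrix_inv \<beta> *v vbar cj z))"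
      using e3 by simp
    hence "- (z' v* ibe) = - ((z v* ibe) v* matrix_inv hs)"
      unfolding vbar_mv_star vbar_vbar ibs shi[unfolded hi_def] ibe_def
      by (simp only: vm_negm vm_neg)
    thus ?thesis by simp
  qed
  have zm: "z v* m2 = z"
  proof -
    have "z v* m2 = ((z v* h) v* ibe) v* (hs ** \<beta>)"
      by (simp only: m2_def vector_matrix_mul_assoc matrix_mul_assoc)
    also have "\<dots> = ((z v* ibe) v* matrix_inv hs) v* (hs ** \<beta>)" using e2 zz by simp
    also have "\<dots> = z v* (ibe ** matrix_inv hs ** hs ** \<beta>)"
      by (simp only: vector_matrix_mul_assoc matrix_mul_assoc)
    also have "\<dots> = z" unfolding ibe_def
      by (simp only: ic2[OF ihs] minv_ok(2)[OF ib] vector_matrix_mul_rid)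
    finally show ?thesis .
  qed
  have ibN': "ibe ** mstar cj N' = N' ** ibe"
  proof -
    have "ibe ** mstar cj N' = ibe ** (mstar cj N' ** \<beta>) ** ibe"
      unfolding ibe_def by (simp only: matrix_mul_assoc ic1[OF ib])
    also have "\<dots> = ibe ** (\<beta> ** N') ** ibe" by (simp only: NS')
    also have "\<dots> = N' ** ibe" unfolding ibe_def
      by (simp only: matrix_mul_assoc minv_ok(2)[OF ib] matrix_mul_lid)
    finally show ?thesis .
  qed
  have m2N: "m2 ** N = N ** m2"
  proof -
    have "m2 ** N = h ** ibe ** hs ** (\<beta> ** N)" by (simp only: m2_def matrix_mul_assoc)
    also have "\<dots> = h ** ibe ** (mstar cj (N ** h)) ** \<beta>"
      by (simp only: NS mstar_mult hs_def matrix_mul_assoc)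
    also have "\<dots> = h ** ibe ** (mstar cj (h ** N')) ** \<beta>" by (simp only: e1')
    also have "\<dots> = h ** (ibe ** mstar cj N') ** hs ** \<beta>"
      by (simp only: mstar_mult hs_def matrix_mul_assoc)
    also have "\<dots> = (h ** N') ** ibe ** hs ** \<beta>" by (simp only: ibN' matrix_mul_assoc)
    also have "\<dots> = N ** m2" by (simp only: e1'[symmetric] m2_def matrix_mul_assoc)
    finally show ?thesis .
  qed
  have m21: "m2 = mat 1"
    by (rule cyc_stab[OF cy[folded N_def] m2N zm])
  have hU: "hs ** \<beta> ** h = \<beta>"
  proof -
    have "(h ** ibe) ** (hs ** \<beta>) = mat 1" using m21 by (simp only: m2_def matrix_mul_assoc)
    hence "(hs ** \<beta>) ** (h ** ibe) = mat 1" using matrix_left_right_inverse by blast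
    hence "hs ** \<beta> ** h ** ibe ** \<beta> = mat 1 ** \<beta>" by (simp only: matrix_mul_assoc)
    thus ?thesis unfolding ibe_def by (simp only: ic2[OF ib] matrix_mul_lid)
  qed
  thus "h \<in> U cj \<beta>" by (simp add: U_def hs_def)
  define zi where "zi = matrix_inv \<zeta>"
  define a where "a = \<zeta>' ** hi ** zi"
  have f1: "mstar cj \<zeta>' ** \<beta> ** \<zeta>' = \<beta> ** N'"
    unfolding N'_def Nb_def by (simp only: matrix_mul_assoc minv_ok(1)[OF ib] matrix_mul_lid)
  have f2: "matrix_inv hs ** \<beta> ** hi = \<beta>"
  proof -
    have "matrix_inv hs ** \<beta> ** hi = matrix_inv hs ** (hs ** \<beta> ** h) ** hi" by (simp only: hU)
    also have "\<dots> = \<beta>" unfolding hi_def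
      by (simp only: matrix_mul_assoc ic1[OF ih] minv_ok(2)[OF ihs] matrix_mul_lid)
    finally show ?thesis .
  qed
  have f3: "N' ** hi = hi ** N"
    unfolding hi_def N'_def N_def e1 by (simp only: matrix_mul_assoc ic1[OF ih])
  have szi: "mstar cj zi = matrix_inv (mstar cj \<zeta>)" unfolding zi_def by (rule mstar_inv(2)[OF iz])
  have isz: "invertible (mstar cj \<zeta>)" by (rule mstar_inv(1)[OF iz])
  have f4: "matrix_inv (mstar cj \<zeta>) ** \<beta> ** N ** zi = \<beta>"
    unfolding N_def Nb_def zi_def
    by (simp only: matrix_mul_assoc minv_ok(1)[OF ib] matrix_mul_lid minv_ok(2)[OF isz] ic1[OF iz] ic1[OF ib])
  have aU: "mstar cj a ** \<beta> ** a = \<beta>"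
  proof -
    have "mstar cj a ** \<beta> ** a = mstar cj zi ** mstar cj hi ** (mstar cj \<zeta>' ** \<beta> ** \<zeta>') ** hi ** zi"
      by (simp only: a_def mstar_mult matrix_mul_assoc)
    also have "\<dots> = mstar cj zi ** (matrix_inv hs ** \<beta> ** hi) ** N ** zi"
      by (simp only: f1 shi lift2[OF f3] matrix_mul_assoc)
    also have "\<dots> = matrix_inv (mstar cj \<zeta>) ** \<beta> ** N ** zi" by (simp only: f2 szi)
    also have "\<dots> = \<beta>" by (rule f4)
    finally show ?thesis .
  qed
  have ia: "invertible a" unfolding a_def hi_def zi_def
    by (intro invertible_mult invertible_minv iz iz' ih)
  define ga where "ga = matrix_inv a"
  have isa: "invertible (mstar cj a)" by (rule mstar_inv(1)[OF ia])
  have gaU: "ga \<in> U cj \<beta>"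
  proof -
    have "mstar cj ga ** \<beta> ** ga = matrix_inv (mstar cj a) ** (mstar cj a ** \<beta> ** a) ** matrix_inv a"
      by (simp only: aU ga_def mstar_inv(2)[OF ia])
    also have "\<dots> = \<beta>"
      by (simp only: matrix_mul_assoc ic1[OF ia] minv_ok(2)[OF isa] matrix_mul_lid)
    finally show ?thesis by (simp add: U_def)
  qed
  have gai: "matrix_inv ga = a" unfolding ga_def by (rule minv_minv[OF ia])
  have "\<zeta>' = matrix_inv ga ** \<zeta> ** h"
    unfolding gai a_def hi_def zi_def
    by (simp only: ic2[OF iz] ic2[OF ih])
  thus "UU_orbit cj \<beta> \<zeta> \<zeta>'" unfolding UU_orbit_def
    using gaU \<open>h \<in> U cj \<beta>\<close> by blast
qed

end



definition cm :: "'a::field^'n^'n \<Rightarrow> 'a^'n^'n \<Rightarrow> bool" where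
  "cm \<xi> A \<longleftrightarrow> A ** \<xi> = \<xi> ** A"

lemma cm_mult: "cm \<xi> A \<Longrightarrow> cm \<xi> B \<Longrightarrow> cm \<xi> (A ** B)"
  unfolding cm_def by (metis matrix_mul_assoc)

lemma cm_add: "cm \<xi> A \<Longrightarrow> cm \<xi> B \<Longrightarrow> cm \<xi> (A + (B::'a::field^'n^'n))"
  unfolding cm_def by (simp add: matrix_add_ldistrib mat_add_rdistrib)

lemma cm_mat: "cm \<xi> (mat c)"
  unfolding cm_def by (rule mat_mult_comm)

lemma cm_inv:
  fixes A :: "'a::field^'n^'n"
  assumes "invertible A" "cm \<xi> A" shows "cm \<xi> (matrix_inv A)"
proof -
  have "matrix_inv A ** \<xi> = matrix_inv A ** \<xi> ** A ** matrix_inv A"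
    by (simp only: ic1[OF assms(1)])
  also have "\<dots> = matrix_inv A ** (A ** \<xi>) ** matrix_inv A"
    using assms(2) unfolding cm_def by (simp only: matrix_mul_assoc)
  also have "\<dots> = \<xi> ** matrix_inv A"
    by (simp only: matrix_mul_assoc minv_ok(2)[OF assms(1)] matrix_mul_lid)
  finally show ?thesis unfolding cm_def .
qed

context qi begin

lemma cm_mbar: "mbar cj \<xi> = \<xi> \<Longrightarrow> cm \<xi> A \<Longrightarrow> cm \<xi> (mbar cj (A::'e^'n^'n))"
  unfolding cm_def by (metis mbar_mult)

lemma normal_comm:
  fixes \<gamma> :: "'e^'n^'n"
  assumes "mbar cj (mbar cj \<gamma> ** \<gamma>) = mbar cj \<gamma> ** \<gamma>"
  shows "\<gamma> ** mbar cj \<gamma> = mbar cj \<gamma> ** \<gamma>" "cm (mbar cj \<gamma> ** \<gamma>) \<gamma>"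
proof -
  show gg: "\<gamma> ** mbar cj \<gamma> = mbar cj \<gamma> ** \<gamma>"
    using assms by (simp only: mbar_mult mbar_mbar)
  show "cm (mbar cj \<gamma> ** \<gamma>) \<gamma>" unfolding cm_def
    by (simp only: matrix_mul_assoc gg)
qed

lemma partA_fwd:
  fixes \<gamma> t :: "'e^'n^'n"
  assumes nx: "mbar cj (mbar cj \<gamma> ** \<gamma>) = mbar cj \<gamma> ** \<gamma>"
    and it: "invertible t" and tc: "matrix_inv t ** \<gamma> ** mbar cj t = \<gamma>"
  shows "same_orbit_M (mbar cj \<gamma> ** \<gamma>, x, y) (mbar cj \<gamma> ** \<gamma>, x v* t, matrix_inv t *v y)"
proof -
  define \<xi> where "\<xi> = mbar cj \<gamma> ** \<gamma>"
  have "t ** (matrix_inv t ** \<gamma> ** mbar cj t) = t ** \<gamma>" using tc by simp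
  hence e: "\<gamma> ** mbar cj t = t ** \<gamma>"
    by (simp only: matrix_mul_assoc minv_ok(1)[OF it] matrix_mul_lid)
  have eb: "mbar cj \<gamma> ** t = mbar cj t ** mbar cj \<gamma>"
    using arg_cong[OF e, of "mbar cj"] by (simp only: mbar_mult mbar_mbar)
  have "mbar cj t ** \<xi> = \<xi> ** mbar cj t"
  proof -
    have "mbar cj t ** \<xi> = mbar cj t ** mbar cj \<gamma> ** \<gamma>" by (simp only: \<xi>_def matrix_mul_assoc)
    also have "\<dots> = mbar cj \<gamma> ** (t ** \<gamma>)" by (simp only: eb matrix_mul_assoc)
    also have "\<dots> = \<xi> ** mbar cj t" by (simp only: e[symmetric] \<xi>_def matrix_mul_assoc)
    finally show ?thesis .
  qed
  hence "mbar cj (mbar cj t ** \<xi>) = mbar cj (\<xi> ** mbar cj t)" by simp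
  hence "t ** \<xi> = \<xi> ** t" using nx unfolding \<xi>_def[symmetric] by (simp only: mbar_mult mbar_mbar)
  hence c: "matrix_inv t ** \<xi> ** t = \<xi>" by (simp only: conj_eq_iff[OF it])
  show ?thesis unfolding same_orbit_M_def \<xi>_def[symmetric]
  proof (rule bexI[of _ t])
    show "t \<in> GL" using it by (simp add: GL_def)
  qed (simp only: prod.case c)
qed

end



context qi begin

lemma partA_rev:
  fixes \<gamma> \<gamma>' h :: "'e^'n^'n" and x x' :: "'e^'n"
  assumes ig: "invertible \<gamma>" and ig': "invertible \<gamma>'" and ih: "invertible h"
    and nx: "mbar cj (mbar cj \<gamma> ** \<gamma>) = mbar cj \<gamma> ** \<gamma>"
    and nx': "mbar cj (mbar cj \<gamma>' ** \<gamma>') = mbar cj \<gamma>' ** \<gamma>'"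
    and vx: "vbar cj x = x" and vx': "vbar cj x' = x'"
    and cy: "cyc (mbar cj \<gamma> ** \<gamma>) x"
    and e1: "mbar cj \<gamma>' ** \<gamma>' = matrix_inv h ** (mbar cj \<gamma> ** \<gamma>) ** h"
    and e2: "x' = x v* h"
  shows "mbar cj h = h" "sigma_conj cj \<gamma> \<gamma>'"
proof -
  define \<xi> where "\<xi> = mbar cj \<gamma> ** \<gamma>"
  define \<xi>' where "\<xi>' = mbar cj \<gamma>' ** \<gamma>'"
  define hi where "hi = matrix_inv h"
  have nxx: "mbar cj \<xi> = \<xi>" using nx \<xi>_def by simp
  have nxx': "mbar cj \<xi>' = \<xi>'" using nx' \<xi>'_def by simp
  have cy': "cyc \<xi> x" using cy \<xi>_def by simp
  have e: "\<xi> ** h = h ** \<xi>'"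
    unfolding \<xi>'_def e1 \<xi>_def[symmetric] by (simp only: matrix_mul_assoc minv_ok(1)[OF ih] matrix_mul_lid)
  have eb: "\<xi> ** mbar cj h = mbar cj h ** \<xi>'"
    using arg_cong[OF e, of "mbar cj"] by (simp only: mbar_mult nxx nxx')
  have hix: "hi ** \<xi> = \<xi>' ** hi"
  proof -
    have "hi ** \<xi> = hi ** \<xi> ** h ** hi" unfolding hi_def by (simp only: ic1[OF ih])
    also have "\<dots> = hi ** h ** \<xi>' ** hi" by (simp only: matrix_mul_assoc lift2[OF e])
    also have "\<dots> = \<xi>' ** hi" unfolding hi_def by (simp only: minv_ok(2)[OF ih] matrix_mul_lid)
    finally show ?thesis .
  qed
  define k where "k = mbar cj h ** hi"
  have kx: "k ** \<xi> = \<xi> ** k"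
  proof -
    have "k ** \<xi> = mbar cj h ** (hi ** \<xi>)" by (simp only: k_def matrix_mul_assoc)
    also have "\<dots> = (\<xi> ** mbar cj h) ** hi" by (simp only: hix matrix_mul_assoc eb)
    also have "\<dots> = \<xi> ** k" by (simp only: k_def matrix_mul_assoc)
    finally show ?thesis .
  qed
  have xb: "x v* mbar cj h = x v* h"
  proof -
    have "x v* mbar cj h = vbar cj (x v* h)" by (simp only: vbar_vm vx)
    also have "\<dots> = x v* h" using vx' e2 by simp
    finally show ?thesis .
  qed
  have xk: "x v* k = x"
  proof -
    have "x v* k = (x v* mbar cj h) v* hi" by (simp only: k_def vector_matrix_mul_assoc)
    also have "\<dots> = x" unfolding xb hi_def
      by (simp only: vector_matrix_mul_assoc minv_ok(1)[OF ih] vector_matrix_mul_rid)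
    finally show ?thesis .
  qed
  have "k = mat 1" by (rule cyc_stab[OF cy' kx xk])
  hence "mbar cj h ** hi ** h = h" by (simp only: k_def matrix_mul_lid)
  thus hb: "mbar cj h = h" unfolding hi_def by (simp only: ic2[OF ih])
  have hib: "mbar cj hi = hi" unfolding hi_def by (simp only: mbar_inv(2)[OF ih] hb)
  have gg: "\<gamma> ** mbar cj \<gamma> = \<xi>" using normal_comm(1)[OF nx] \<xi>_def by simp
  have gg': "\<gamma>' ** mbar cj \<gamma>' = \<xi>'" using normal_comm(1)[OF nx'] \<xi>'_def by simp
  have cg: "cm \<xi> \<gamma>" using normal_comm(2)[OF nx] \<xi>_def by simp
  have cg': "cm \<xi>' \<gamma>'" using normal_comm(2)[OF nx'] \<xi>'_def by simp
  define g3 where "g3 = h ** \<gamma>' ** hi"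
  have ig3: "invertible g3" unfolding g3_def hi_def by (intro invertible_mult invertible_minv ih ig')
  have g3b: "mbar cj g3 = h ** mbar cj \<gamma>' ** hi" by (simp only: g3_def mbar_mult hb hib)
  have F1: "g3 ** mbar cj g3 = \<xi>"
  proof -
    have "g3 ** mbar cj g3 = h ** (\<gamma>' ** mbar cj \<gamma>') ** hi"
      unfolding g3b unfolding g3_def hi_def by (simp only: matrix_mul_assoc ic2[OF ih])
    also have "\<dots> = \<xi> ** h ** hi" by (simp only: gg' e[symmetric] matrix_mul_assoc)
    also have "\<dots> = \<xi>" unfolding hi_def by (rule ic1[OF ih])
    finally show ?thesis .
  qed
  have F1': "mbar cj g3 ** g3 = \<xi>"
  proof -
    have "mbar cj g3 ** g3 = h ** (mbar cj \<gamma>' ** \<gamma>') ** hi"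
      unfolding g3b unfolding g3_def hi_def by (simp only: matrix_mul_assoc ic2[OF ih])
    also have "\<dots> = \<xi> ** h ** hi" by (simp only: \<xi>'_def[symmetric] e[symmetric] matrix_mul_assoc)
    also have "\<dots> = \<xi>" unfolding hi_def by (rule ic1[OF ih])
    finally show ?thesis .
  qed
  have cg3: "cm \<xi> g3"
  proof -
    have "g3 ** \<xi> = h ** \<gamma>' ** (hi ** \<xi>)" by (simp only: g3_def matrix_mul_assoc)
    also have "\<dots> = h ** (\<gamma>' ** \<xi>') ** hi" by (simp only: hix matrix_mul_assoc)
    also have "\<dots> = (h ** \<xi>') ** \<gamma>' ** hi" using cg' unfolding cm_def by (simp only: matrix_mul_assoc)
    also have "\<dots> = \<xi> ** g3" by (simp only: e[symmetric] g3_def matrix_mul_assoc)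
    finally show ?thesis unfolding cm_def .
  qed
  have cg3b: "cm \<xi> (mbar cj g3)"
  proof -
    have "mbar cj g3 ** \<xi> = mbar cj g3 ** g3 ** mbar cj g3" by (simp only: F1[symmetric] matrix_mul_assoc)
    also have "\<dots> = \<xi> ** mbar cj g3" by (simp only: F1')
    finally show ?thesis unfolding cm_def .
  qed
  define gi where "gi = matrix_inv \<gamma>"
  have cgi: "cm \<xi> gi" unfolding gi_def by (rule cm_inv[OF ig cg])
  define a where "a = g3 ** gi"
  have ia: "invertible a" unfolding a_def gi_def by (intro invertible_mult invertible_minv ig3 ig)
  have ca: "cm \<xi> a" unfolding a_def by (rule cm_mult[OF cg3 cgi])
  have igb: "invertible (mbar cj \<gamma>)" by (rule mbar_inv(1)[OF ig])
  have ixi: "invertible \<xi>" unfolding \<xi>_def by (rule invertible_mult[OF igb ig])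
  have comm1: "gi ** mbar cj g3 = mbar cj g3 ** gi"
    using cyc_comm[OF cy' cgi[unfolded cm_def] cg3b[unfolded cm_def]] .
  have aab: "a ** mbar cj a = mat 1"
  proof -
    have "a ** mbar cj a = g3 ** (gi ** mbar cj g3) ** matrix_inv (mbar cj \<gamma>)"
      by (simp only: a_def gi_def mbar_mult mbar_inv(2)[OF ig] matrix_mul_assoc)
    also have "\<dots> = (g3 ** mbar cj g3) ** (gi ** matrix_inv (mbar cj \<gamma>))"
      by (simp only: comm1 matrix_mul_assoc)
    also have "\<dots> = \<xi> ** matrix_inv \<xi>"
      by (simp only: F1 gi_def \<xi>_def minv_mult[OF igb ig])
    also have "\<dots> = mat 1" by (rule minv_ok(1)[OF ixi])
    finally show ?thesis .
  qed
  obtain \<theta> where ic: "invertible (mat \<theta> + mat (cj \<theta>) ** a)" using hilbert90[OF ia] by blast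
  define c where "c = mat \<theta> + mat (cj \<theta>) ** a"
  have ic': "invertible c" using ic c_def by simp
  have cb: "mbar cj c = mat (cj \<theta>) + mat \<theta> ** mbar cj a"
    by (simp only: c_def mbar_add mbar_mat mbar_mult inv)
  have acb: "a ** mbar cj c = c"
  proof -
    have m1: "a ** mat (cj \<theta>) = mat (cj \<theta>) ** a" by (rule mat_mult_comm[symmetric])
    have m2: "a ** (mat \<theta> ** mbar cj a) = mat \<theta> ** (a ** mbar cj a)"
      by (simp only: matrix_mul_assoc mat_mult_comm[of \<theta> a, symmetric])
    have "a ** mbar cj c = a ** mat (cj \<theta>) + a ** (mat \<theta> ** mbar cj a)"
      by (simp only: cb matrix_add_ldistrib)
    also have "\<dots> = mat (cj \<theta>) ** a + mat \<theta> ** mat 1" by (simp only: m1 m2 aab)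
    also have "\<dots> = c" by (simp only: c_def matrix_mul_rid add.commute)
    finally show ?thesis .
  qed
  have cc: "cm \<xi> c" unfolding c_def by (intro cm_add cm_mult cm_mat ca)
  have icb: "invertible (mbar cj c)" by (rule mbar_inv(1)[OF ic'])
  have ccb: "cm \<xi> (matrix_inv (mbar cj c))" by (intro cm_inv icb cm_mbar nxx cc)
  have comm2: "matrix_inv (mbar cj c) ** \<gamma> = \<gamma> ** matrix_inv (mbar cj c)"
    using cyc_comm[OF cy' ccb[unfolded cm_def] cg[unfolded cm_def]] .
  have "a = a ** mbar cj c ** matrix_inv (mbar cj c)" by (simp only: ic1[OF icb])
  hence a_eq: "a = c ** matrix_inv (mbar cj c)" by (simp only: acb)
  have g3_eq: "g3 = c ** \<gamma> ** matrix_inv (mbar cj c)"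
  proof -
    have "g3 = a ** \<gamma>" unfolding a_def gi_def by (simp only: ic2[OF ig])
    also have "\<dots> = c ** (matrix_inv (mbar cj c) ** \<gamma>)" by (simp only: a_eq matrix_mul_assoc)
    also have "\<dots> = c ** \<gamma> ** matrix_inv (mbar cj c)" by (simp only: comm2 matrix_mul_assoc)
    finally show ?thesis .
  qed
  have g'_eq: "\<gamma>' = hi ** g3 ** h"
    unfolding g3_def hi_def by (simp only: matrix_mul_assoc minv_ok(2)[OF ih] matrix_mul_lid ic2[OF ih])
  define g where "g = matrix_inv c ** h"
  have igg: "invertible g" unfolding g_def by (intro invertible_mult invertible_minv ic' ih)
  have ginv: "matrix_inv g = hi ** c"
    unfolding g_def hi_def by (simp only: minv_mult[OF invertible_minv[OF ic'] ih] minv_minv[OF ic'])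
  have gb: "mbar cj g = matrix_inv (mbar cj c) ** h"
    unfolding g_def by (simp only: mbar_mult mbar_inv(2)[OF ic'] hb)
  have "\<gamma>' = matrix_inv g ** \<gamma> ** mbar cj g"
    by (simp only: ginv gb g'_eq g3_eq matrix_mul_assoc)
  thus "sigma_conj cj \<gamma> \<gamma>'" unfolding sigma_conj_def GL_def using igg by blast
qed

end



lemma Fvecs_vbar: "x \<in> Fvecs cj \<Longrightarrow> vbar cj x = x"
  by (simp add: Fvecs_def vbar_def vec_eq_iff)

lemma M_rss_cyc: "M_rss \<xi> x y \<Longrightarrow> cyc \<xi> x"
  by (simp add: M_rss_def cyc_def)

context qi begin

lemma sigma_refl: "sigma_conj cj \<gamma> (\<gamma>::'e^'n^'n)"
proof -
  have "(mat 1::'e^'n^'n) \<in> GL" using invertible_mat[of "1::'e"] by (simp add: GL_def)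
  moreover have "\<gamma> = matrix_inv (mat 1) ** \<gamma> ** mbar cj (mat 1)"
    by (simp only: minv_I mbar_mat one matrix_mul_lid matrix_mul_rid)
  ultimately show ?thesis unfolding sigma_conj_def by blast
qed

lemma partA:
  fixes S :: "('e^'n^'n) set"
  assumes iS: "is_S cj S"
    and m: "(\<gamma>, x, y) \<in> X_rss cj S" and m': "(\<gamma>', x', y') \<in> X_rss cj S"
  shows "X_equiv cj (\<gamma>, x, y) (\<gamma>', x', y') \<longleftrightarrow>
         same_orbit_M (mbar cj \<gamma> ** \<gamma>, x, y) (mbar cj \<gamma>' ** \<gamma>', x', y')"
proof -
  have gS: "\<gamma> \<in> S" and xF: "x \<in> Fvecs cj" and Mr: "M_rss (mbar cj \<gamma> ** \<gamma>) x y"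
    using m by (auto simp: X_rss_def)
  have gS': "\<gamma>' \<in> S" and xF': "x' \<in> Fvecs cj"
    using m' by (auto simp: X_rss_def)
  have gprops: "\<gamma> \<in> GL" "reg_ss (mbar cj \<gamma> ** \<gamma>)" "normal_sigma cj \<gamma>"
    using iS gS by (auto simp: is_S_def)
  have gprops': "\<gamma>' \<in> GL" "normal_sigma cj \<gamma>'"
    using iS gS' by (auto simp: is_S_def)
  have ig: "invertible \<gamma>" and ig': "invertible \<gamma>'" using gprops gprops' by (auto simp: GL_def)
  have nx: "mbar cj (mbar cj \<gamma> ** \<gamma>) = mbar cj \<gamma> ** \<gamma>"
    using gprops(3) by (simp add: normal_sigma_def)
  have nx': "mbar cj (mbar cj \<gamma>' ** \<gamma>') = mbar cj \<gamma>' ** \<gamma>'"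
    using gprops'(2) by (simp add: normal_sigma_def)
  have cy: "cyc (mbar cj \<gamma> ** \<gamma>) x" by (rule M_rss_cyc[OF Mr])
  have uniq: "\<exists>!\<gamma>0 \<in> S. sigma_conj cj \<gamma> \<gamma>0" using iS gprops(1,2) by (auto simp: is_S_def)
  show ?thesis
  proof
    assume "X_equiv cj (\<gamma>, x, y) (\<gamma>', x', y')"
    then obtain t where eq: "\<gamma>' = \<gamma>" and tT: "t \<in> T_sigma cj \<gamma>" and tx: "x v* t = x'"
      and ty: "matrix_inv t *v y = y'" by (auto simp: X_equiv_def)
    have it: "invertible t" and tc: "matrix_inv t ** \<gamma> ** mbar cj t = \<gamma>"
      using tT by (auto simp: T_sigma_def GL_def)
    show "same_orbit_M (mbar cj \<gamma> ** \<gamma>, x, y) (mbar cj \<gamma>' ** \<gamma>', x', y')"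
      using partA_fwd[OF nx it tc, of x y] eq tx ty by simp
  next
    assume "same_orbit_M (mbar cj \<gamma> ** \<gamma>, x, y) (mbar cj \<gamma>' ** \<gamma>', x', y')"
    then obtain h where hG: "h \<in> GL"
      and e1: "mbar cj \<gamma>' ** \<gamma>' = matrix_inv h ** (mbar cj \<gamma> ** \<gamma>) ** h"
      and e2: "x' = x v* h" and e3: "y' = matrix_inv h *v y"
      unfolding same_orbit_M_def by auto
    have ih: "invertible h" using hG by (simp add: GL_def)
    note r = partA_rev[OF ig ig' ih nx nx' Fvecs_vbar[OF xF] Fvecs_vbar[OF xF'] cy e1 e2]
    have "\<gamma>' = \<gamma>" using uniq gS gS' r(2) sigma_refl[of \<gamma>] by blast
    hence "matrix_inv h ** (mbar cj \<gamma> ** \<gamma>) ** h = mbar cj \<gamma> ** \<gamma>" using e1 by simp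
    hence hx: "h ** (mbar cj \<gamma> ** \<gamma>) = (mbar cj \<gamma> ** \<gamma>) ** h"
      by (subst (asm) conj_eq_iff[OF ih]) (rule sym)
    have gx: "\<gamma> ** (mbar cj \<gamma> ** \<gamma>) = (mbar cj \<gamma> ** \<gamma>) ** \<gamma>"
      using normal_comm(2)[OF nx] unfolding cm_def .
    have "\<gamma> ** h = h ** \<gamma>" by (rule cyc_comm[OF cy gx hx])
    hence "matrix_inv h ** \<gamma> ** mbar cj h = \<gamma>" by (simp only: r(1) conj_eq_iff[OF ih])
    hence "h \<in> T_sigma cj \<gamma>" using hG by (simp add: T_sigma_def)
    thus "X_equiv cj (\<gamma>, x, y) (\<gamma>', x', y')"
      unfolding X_equiv_def using \<open>\<gamma>' = \<gamma>\<close> e2 e3 by auto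
  qed
qed

lemma U_one: "(mat 1::'e^'n^'n) \<in> U cj \<beta>"
  by (simp add: U_def mstar_mat)

lemma partB:
  fixes R :: "('e^'n^'n) set" and \<beta> :: "'e^'n^'n"
  assumes sk: "skew_herm_inv cj \<beta>" and iR: "is_R cj \<beta> R"
    and m: "(\<zeta>, z) \<in> Y_rss cj \<beta> R" and m': "(\<zeta>', z') \<in> Y_rss cj \<beta> R"
  shows "Y_equiv cj \<beta> (\<zeta>, z) (\<zeta>', z') \<longleftrightarrow>
         same_orbit_M (Mtriple_Y cj \<beta> \<zeta> z) (Mtriple_Y cj \<beta> \<zeta>' z')"
proof -
  have zR: "\<zeta> \<in> R" and Mr: "M_rss (Nb cj \<beta> \<zeta>) z (matrix_inv \<beta> *v vbar cj z)"
    using m by (auto simp: Y_rss_def Mtriple_Y_def)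
  have zR': "\<zeta>' \<in> R" using m' by (auto simp: Y_rss_def)
  have zp: "UU_rss cj \<beta> \<zeta>" "normal_beta cj \<beta> \<zeta>" "Nb cj \<beta> \<zeta> \<in> norm_image cj"
    using iR zR by (auto simp: is_R_def)
  have zp': "UU_rss cj \<beta> \<zeta>'" using iR zR' by (auto simp: is_R_def)
  have iz: "invertible \<zeta>" and iz': "invertible \<zeta>'" using zp(1) zp' by (auto simp: UU_rss_def GL_def)
  have cy: "cyc (Nb cj \<beta> \<zeta>) z" by (rule M_rss_cyc[OF Mr])
  have uniq: "\<exists>!\<zeta>0 \<in> R. UU_orbit cj \<beta> \<zeta> \<zeta>0" using iR zp(1,3) by (auto simp: is_R_def)
  have refl: "UU_orbit cj \<beta> \<zeta> \<zeta>"
  proof -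
    have "\<zeta> = matrix_inv (mat 1) ** \<zeta> ** mat 1" by (simp only: minv_I matrix_mul_lid matrix_mul_rid)
    thus ?thesis unfolding UU_orbit_def using U_one by blast
  qed
  show ?thesis
  proof
    assume "Y_equiv cj \<beta> (\<zeta>, z) (\<zeta>', z')"
    then obtain t where eq: "\<zeta>' = \<zeta>" and tT: "t \<in> T_U cj \<beta> \<zeta>" and tz: "z v* t = z'"
      by (auto simp: Y_equiv_def)
    have tU: "t \<in> U cj \<beta>" and tc: "t ** \<zeta> = \<zeta> ** t" using tT by (auto simp: T_U_def)
    show "same_orbit_M (Mtriple_Y cj \<beta> \<zeta> z) (Mtriple_Y cj \<beta> \<zeta>' z')"
      using partB_fwd[OF sk tU tc, of z] eq tz by simp
  next
    assume "same_orbit_M (Mtriple_Y cj \<beta> \<zeta> z) (Mtriple_Y cj \<beta> \<zeta>' z')"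
    then obtain h where hG: "h \<in> GL"
      and e1: "Nb cj \<beta> \<zeta>' = matrix_inv h ** Nb cj \<beta> \<zeta> ** h"
      and e2: "z' = z v* h"
      and e3: "matrix_inv \<beta> *v vbar cj z' = matrix_inv h *v (matrix_inv \<beta> *v vbar cj z)"
      unfolding same_orbit_M_def Mtriple_Y_def by auto
    have ih: "invertible h" using hG by (simp add: GL_def)
    note r = partB_rev[OF sk iz iz' ih cy e1 e2 e3]
    have "\<zeta>' = \<zeta>" using uniq zR zR' r(2) refl by blast
    hence "matrix_inv h ** Nb cj \<beta> \<zeta> ** h = Nb cj \<beta> \<zeta>" using e1 by simp
    hence hx: "h ** Nb cj \<beta> \<zeta> = Nb cj \<beta> \<zeta> ** h"
      by (subst (asm) conj_eq_iff[OF ih]) (rule sym)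
    have zx: "\<zeta> ** Nb cj \<beta> \<zeta> = Nb cj \<beta> \<zeta> ** \<zeta>"
      using zp(2) by (simp add: normal_beta_def)
    have "h ** \<zeta> = \<zeta> ** h" by (rule cyc_comm[OF cy hx zx])
    hence "h \<in> T_U cj \<beta> \<zeta>" using r(1) by (simp add: T_U_def)
    thus "Y_equiv cj \<beta> (\<zeta>, z) (\<zeta>', z')"
      unfolding Y_equiv_def using \<open>\<zeta>' = \<zeta>\<close> e2 by auto
  qed
qed

end

theorem mainTheorem11:
  fixes cj :: "'e::field_char_0 \<Rightarrow> 'e"
    and S :: "('e^'n^'n) set"
    and \<beta> :: "'e^'n^'n"
    and R :: "('e^'n^'n) set"
  assumes "quad_involution cj"
    and "is_S cj S"
    and "skew_herm_inv cj \<beta>"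
    and "is_R cj \<beta> R"
  shows "(\<forall>\<gamma> x y \<gamma>' x' y'. (\<gamma>, x, y) \<in> X_rss cj S \<longrightarrow> (\<gamma>', x', y') \<in> X_rss cj S \<longrightarrow>
            (X_equiv cj (\<gamma>, x, y) (\<gamma>', x', y') \<longleftrightarrow>
             same_orbit_M (mbar cj \<gamma> ** \<gamma>, x, y) (mbar cj \<gamma>' ** \<gamma>', x', y')))
       \<and> (\<forall>\<zeta> z \<zeta>' z'. (\<zeta>, z) \<in> Y_rss cj \<beta> R \<longrightarrow> (\<zeta>', z') \<in> Y_rss cj \<beta> R \<longrightarrow>
            (Y_equiv cj \<beta> (\<zeta>, z) (\<zeta>', z') \<longleftrightarrow>
             same_orbit_M (Mtriple_Y cj \<beta> \<zeta> z) (Mtriple_Y cj \<beta> \<zeta>' z')))"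
proof -
  interpret qi cj by (rule qi_from[OF assms(1)])
  show ?thesis
  proof (intro conjI allI impI)
    fix \<gamma> x y \<gamma>' x' y'
    assume "(\<gamma>, x, y) \<in> X_rss cj S" "(\<gamma>', x', y') \<in> X_rss cj S"
    thus "X_equiv cj (\<gamma>, x, y) (\<gamma>', x', y') \<longleftrightarrow>
             same_orbit_M (mbar cj \<gamma> ** \<gamma>, x, y) (mbar cj \<gamma>' ** \<gamma>', x', y')"
      by (rule partA[OF assms(2)])
  next
    fix \<zeta> z \<zeta>' z'
    assume "(\<zeta>, z) \<in> Y_rss cj \<beta> R" "(\<zeta>', z') \<in> Y_rss cj \<beta> R"
    thus "Y_equiv cj \<beta> (\<zeta>, z) (\<zeta>', z') \<longleftrightarrow>
             same_orbit_M (Mtriple_Y cj \<beta> \<zeta> z) (Mtriple_Y cj \<beta> \<zeta>' z')"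
      by (rule partB[OF assms(3) assms(4)])
  qed
qed

end
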